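(* Let $\bar{w}$ be a nice sequence. Then: (1) $(x\;\bar{w}) \in \mathcal{N}$ for every $\lambda$-variable $x$. (2) If $u \in \mathcal{N}$ and $(t[x:=u]\;\bar{w}) \in \mathcal{N}$, then $((\lambda x.t\;u)\;\bar{w}) \in \mathcal{N}$. (3) If $t_1,t_2 \in \mathcal{N}$ and $(t_i\;\bar{w}) \in \mathcal{N}$ (for $i\in\{1,2\}$), then $((\langle t_1,t_2\rangle\;\pi_i)\;\bar{w}) \in \mathcal{N}$. (4) If $t,u_1,u_2 \in \mathcal{N}$ and $u_i[x_i:=t] \in \mathcal{N}$ (for $i\in\{1,2\}$), then $(\omega_i t\;[x_1.u_1,x_2.u_2]) \in \mathcal{N}$. (5) If $t[a:=^*\bar{w}] \in \mathcal{N}$, then $(\mu a.t\;\bar{w}) \in \mathcal{N}$.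
   Context: With disjoint sets of $\lambda$-variables $x,y,\dots$ and $\mu$-variables $a,b,\dots$, terms and $\mathcal{E}$-terms are $\mathcal{T} ::= x \mid \lambda x.\mathcal{T} \mid (\mathcal{T}\;\mathcal{E}) \mid \langle \mathcal{T},\mathcal{T}\rangle \mid \omega_1\mathcal{T} \mid \omega_2\mathcal{T} \mid \mu a.\mathcal{T} \mid (a\;\mathcal{T})$, $\mathcal{E} ::= \mathcal{T} \mid \pi_1 \mid \pi_2 \mid [x.\mathcal{T}, y.\mathcal{T}]$ (up to renaming of bound variables). The one-step reduction $\triangleright$ is the closure under all constructors of: $(\lambda x.u\;v)\triangleright u[x:=v]$; $(\langle t_1,t_2\rangle\;\pi_i)\triangleright t_i$; $(\omega_i t\;[x_1.u_1,x_2.u_2])\triangleright u_i[x_i:=t]$; $((t\;[x_1.u_1,x_2.u_2])\;\varepsilon)\triangleright(t\;[x_1.(u_1\;\varepsilon),x_2.(u_2\;\varepsilon)])$; $(\mu a.t\;\varepsilon)\triangleright\mu a.t[a:=^*\varepsilon]$, where $t[a:=^*\varepsilon]$ replaces inductively each subterm $(a\;v)$ by $(a\;(v\;\varepsilon))$. $\mathcal{N}$ (resp. $\mathcal{N}'$) is the set of strongly normalizable terms (resp. $\mathcal{E}$-terms), i.e. those admitting no infinite $\triangleright$-reduction sequence. For a finite sequence $\bar{w}=w_1\dots w_n$ of $\mathcal{E}$-terms and a term $t$: $(t\;\bar{w})$ is $t$ if $n=0$ and $((t\;w_1)\;w_2\dots w_n)$ otherwise; $t[a:=^*\bar{w}]$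 is obtained from $t$ by replacing inductively each subterm $(a\;v)$ by $(a\;(v\;\bar{w}))$. A finite sequence $\bar{w}=w_1\dots w_n$ of elements of $\mathcal{N}'$ is a nice sequence iff none of $w_1,\dots,w_{n-1}$ is of the form $[x.u,y.v]$ (only $w_n$ may be). *)

theory Defs
  imports Main
begin

text \<open>Terms of the lambda-mu calculus with pairs and sums, in de Bruijn notation.
  lambda-variables and mu-variables live in two separate index spaces.
  Binders: Lam binds a lambda-variable; each branch of Case binds a lambda-variable;
  Mu binds a mu-variable.  trm = T, elim = E (an E-term is a term (Arg), pi1, pi2,
  or a case [x.u, y.v]).\<close>

datatype trm =
    Var nat
  | Lam trm
  | App trm elim
  | Pair trm trm
  | Inj1 trm
  | Inj2 trm
  | Mu trm
  | Named nat trm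
and elim =
    Arg trm
  | Proj1
  | Proj2
  | Case trm trm

primrec liftl :: "nat \<Rightarrow> trm \<Rightarrow> trm" and liftl_e :: "nat \<Rightarrow> elim \<Rightarrow> elim" where
  "liftl k (Var i) = (if i < k then Var i else Var (Suc i))"
| "liftl k (Lam t) = Lam (liftl (Suc k) t)"
| "liftl k (App t e) = App (liftl k t) (liftl_e k e)"
| "liftl k (Pair t1 t2) = Pair (liftl k t1) (liftl k t2)"
| "liftl k (Inj1 t) = Inj1 (liftl k t)"
| "liftl k (Inj2 t) = Inj2 (liftl k t)"
| "liftl k (Mu t) = Mu (liftl k t)"
| "liftl k (Named a t) = Named a (liftl k t)"
| "liftl_e k (Arg t) = Arg (liftl k t)"
| "liftl_e k Proj1 = Proj1"
| "liftl_e k Proj2 = Proj2"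
| "liftl_e k (Case u v) = Case (liftl (Suc k) u) (liftl (Suc k) v)"

primrec liftm :: "nat \<Rightarrow> trm \<Rightarrow> trm" and liftm_e :: "nat \<Rightarrow> elim \<Rightarrow> elim" where
  "liftm k (Var i) = Var i"
| "liftm k (Lam t) = Lam (liftm k t)"
| "liftm k (App t e) = App (liftm k t) (liftm_e k e)"
| "liftm k (Pair t1 t2) = Pair (liftm k t1) (liftm k t2)"
| "liftm k (Inj1 t) = Inj1 (liftm k t)"
| "liftm k (Inj2 t) = Inj2 (liftm k t)"
| "liftm k (Mu t) = Mu (liftm (Suc k) t)"
| "liftm k (Named a t) = Named (if a < k then a else Suc a) (liftm k t)"
| "liftm_e k (Arg t) = Arg (liftm k t)"
| "liftm_e k Proj1 = Proj1"
| "liftm_e k Proj2 = Proj2"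
| "liftm_e k (Case u v) = Case (liftm k u) (liftm k v)"

primrec subst :: "trm \<Rightarrow> nat \<Rightarrow> trm \<Rightarrow> trm" and subst_e :: "elim \<Rightarrow> nat \<Rightarrow> trm \<Rightarrow> elim" where
  "subst (Var i) k s = (if i < k then Var i else if i = k then s else Var (i - 1))"
| "subst (Lam t) k s = Lam (subst t (Suc k) (liftl 0 s))"
| "subst (App t e) k s = App (subst t k s) (subst_e e k s)"
| "subst (Pair t1 t2) k s = Pair (subst t1 k s) (subst t2 k s)"
| "subst (Inj1 t) k s = Inj1 (subst t k s)"
| "subst (Inj2 t) k s = Inj2 (subst t k s)"
| "subst (Mu t) k s = Mu (subst t k (liftm 0 s))"
| "subst (Named a t) k s = Named a (subst t k s)"
| "subst_e (Arg t) k s = Arg (subst t k s)"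
| "subst_e Proj1 k s = Proj1"
| "subst_e Proj2 k s = Proj2"
| "subst_e (Case u v) k s = Case (subst u (Suc k) (liftl 0 s)) (subst v (Suc k) (liftl 0 s))"

fun apps :: "trm \<Rightarrow> elim list \<Rightarrow> trm" where
  "apps t [] = t"
| "apps t (w # ws) = apps (App t w) ws"

text \<open>Structural substitution t[a :=* ws]: every subterm (a v) becomes (a (v ws)).\<close>
primrec ssubst :: "trm \<Rightarrow> nat \<Rightarrow> elim list \<Rightarrow> trm"
  and ssubst_e :: "elim \<Rightarrow> nat \<Rightarrow> elim list \<Rightarrow> elim" where
  "ssubst (Var i) a ws = Var i"
| "ssubst (Lam t) a ws = Lam (ssubst t a (map (liftl_e 0) ws))"
| "ssubst (App t e) a ws = App (ssubst t a ws) (ssubst_e e a ws)"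
| "ssubst (Pair t1 t2) a ws = Pair (ssubst t1 a ws) (ssubst t2 a ws)"
| "ssubst (Inj1 t) a ws = Inj1 (ssubst t a ws)"
| "ssubst (Inj2 t) a ws = Inj2 (ssubst t a ws)"
| "ssubst (Mu t) a ws = Mu (ssubst t (Suc a) (map (liftm_e 0) ws))"
| "ssubst (Named b t) a ws =
     (if b = a then Named b (apps (ssubst t a ws) ws) else Named b (ssubst t a ws))"
| "ssubst_e (Arg t) a ws = Arg (ssubst t a ws)"
| "ssubst_e Proj1 a ws = Proj1"
| "ssubst_e Proj2 a ws = Proj2"
| "ssubst_e (Case u v) a ws =
     Case (ssubst u a (map (liftl_e 0) ws)) (ssubst v a (map (liftl_e 0) ws))"

inductive red :: "trm \<Rightarrow> trm \<Rightarrow> bool" and red_e :: "elim \<Rightarrow> elim \<Rightarrow> bool" where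
  beta: "red (App (Lam u) (Arg v)) (subst u 0 v)"
| proj1: "red (App (Pair t1 t2) Proj1) t1"
| proj2: "red (App (Pair t1 t2) Proj2) t2"
| case1: "red (App (Inj1 t) (Case u1 u2)) (subst u1 0 t)"
| case2: "red (App (Inj2 t) (Case u1 u2)) (subst u2 0 t)"
| comm: "red (App (App t (Case u1 u2)) e)
             (App t (Case (App u1 (liftl_e 0 e)) (App u2 (liftl_e 0 e))))"
| mu: "red (App (Mu t) e) (Mu (ssubst t 0 [liftm_e 0 e]))"
| c_Lam: "red t t' \<Longrightarrow> red (Lam t) (Lam t')"
| c_AppL: "red t t' \<Longrightarrow> red (App t e) (App t' e)"
| c_AppR: "red_e e e' \<Longrightarrow> red (App t e) (App t e')"
| c_PairL: "red t t' \<Longrightarrow> red (Pair t u) (Pair t' u)"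
| c_PairR: "red u u' \<Longrightarrow> red (Pair t u) (Pair t u')"
| c_Inj1: "red t t' \<Longrightarrow> red (Inj1 t) (Inj1 t')"
| c_Inj2: "red t t' \<Longrightarrow> red (Inj2 t) (Inj2 t')"
| c_Mu: "red t t' \<Longrightarrow> red (Mu t) (Mu t')"
| c_Named: "red t t' \<Longrightarrow> red (Named a t) (Named a t')"
| c_Arg: "red t t' \<Longrightarrow> red_e (Arg t) (Arg t')"
| c_CaseL: "red u u' \<Longrightarrow> red_e (Case u v) (Case u' v)"
| c_CaseR: "red v v' \<Longrightarrow> red_e (Case u v) (Case u v')"

definition SN :: "trm \<Rightarrow> bool" where
  "SN t \<longleftrightarrow> \<not> (\<exists>f. f 0 = t \<and> (\<forall>n. red (f n) (f (Suc n))))"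

definition SN_e :: "elim \<Rightarrow> bool" where
  "SN_e e \<longleftrightarrow> \<not> (\<exists>f. f 0 = e \<and> (\<forall>n. red_e (f n) (f (Suc n))))"

definition is_case :: "elim \<Rightarrow> bool" where
  "is_case w \<longleftrightarrow> (\<exists>u v. w = Case u v)"

definition nice :: "elim list \<Rightarrow> bool" where
  "nice ws \<longleftrightarrow> (\<forall>w\<in>set ws. SN_e w) \<and> (\<forall>i. i + 1 < length ws \<longrightarrow> \<not> is_case (ws ! i))"

end

theory Submission
  imports Defs
begin


lemma liftl_liftl:
  "i \<le> j \<Longrightarrow> liftl i (liftl j t) = liftl (Suc j) (liftl i t)"
  "i \<le> j \<Longrightarrow> liftl_e i (liftl_e j e) = liftl_e (Suc j) (liftl_e i e)"
  by (induct t and e arbitrary: i j and i j) auto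

lemma liftm_liftm:
  "i \<le> j \<Longrightarrow> liftm i (liftm j t) = liftm (Suc j) (liftm i t)"
  "i \<le> j \<Longrightarrow> liftm_e i (liftm_e j e) = liftm_e (Suc j) (liftm_e i e)"
  by (induct t and e arbitrary: i j and i j) auto

lemma liftl_liftm:
  "liftl i (liftm j t) = liftm j (liftl i t)"
  "liftl_e i (liftm_e j e) = liftm_e j (liftl_e i e)"
  by (induct t and e arbitrary: i j and i j) auto

lemma subst_liftl:
  "subst (liftl k t) k s = t"
  "subst_e (liftl_e k e) k s = e"
  by (induct t and e arbitrary: k s and k s) auto

lemma liftl_subst1:
  "i \<le> k \<Longrightarrow> liftl i (subst t k s) = subst (liftl i t) (Suc k) (liftl i s)"
  "i \<le> k \<Longrightarrow> liftl_e i (subst_e e k s) = subst_e (liftl_e i e) (Suc k) (liftl i s)"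
  by (induct t and e arbitrary: i k s and i k s)
     (auto simp: liftl_liftl liftl_liftm)

lemma liftl_subst2:
  "k \<le> i \<Longrightarrow> liftl i (subst t k s) = subst (liftl (Suc i) t) k (liftl i s)"
  "k \<le> i \<Longrightarrow> liftl_e i (subst_e e k s) = subst_e (liftl_e (Suc i) e) k (liftl i s)"
  by (induct t and e arbitrary: i k s and i k s)
     (auto simp: liftl_liftl liftl_liftm)

lemma liftm_subst:
  "liftm j (subst t k s) = subst (liftm j t) k (liftm j s)"
  "liftm_e j (subst_e e k s) = subst_e (liftm_e j e) k (liftm j s)"
  by (induct t and e arbitrary: j k s and j k s)
     (auto simp: liftm_liftm liftl_liftm)

lemma subst_subst:
  "i \<le> k \<Longrightarrow> subst (subst t i u) k s = subst (subst t (Suc k) (liftl i s)) i (subst u k s)"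
  "i \<le> k \<Longrightarrow> subst_e (subst_e e i u) k s = subst_e (subst_e e (Suc k) (liftl i s)) i (subst u k s)"
  by (induct t and e arbitrary: i k u s and i k u s)
     (auto simp: liftl_liftl liftl_liftm liftm_subst liftl_subst1 subst_liftl)


primrec fm :: "nat \<Rightarrow> trm \<Rightarrow> bool" and fm_e :: "nat \<Rightarrow> elim \<Rightarrow> bool" where
  "fm a (Var i) = False"
| "fm a (Lam t) = fm a t"
| "fm a (App t e) = (fm a t \<or> fm_e a e)"
| "fm a (trm.Pair t1 t2) = (fm a t1 \<or> fm a t2)"
| "fm a (Inj1 t) = fm a t"
| "fm a (Inj2 t) = fm a t"
| "fm a (Mu t) = fm (Suc a) t"
| "fm a (Named b t) = (b = a \<or> fm a t)"
| "fm_e a (Arg t) = fm a t"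
| "fm_e a Proj1 = False"
| "fm_e a Proj2 = False"
| "fm_e a (Case u v) = (fm a u \<or> fm a v)"

lemma fm_liftl:
  "fm a (liftl k t) = fm a t"
  "fm_e a (liftl_e k e) = fm_e a e"
  by (induct t and e arbitrary: a k and a k) auto

lemma fm_liftm:
  "k \<le> a \<Longrightarrow> fm (Suc a) (liftm k t) = fm a t"
  "k \<le> a \<Longrightarrow> fm_e (Suc a) (liftm_e k e) = fm_e a e"
  by (induct t and e arbitrary: a k and a k) auto

lemma fm_liftm_same:
  "\<not> fm k (liftm k t)"
  "\<not> fm_e k (liftm_e k e)"
  by (induct t and e arbitrary: k and k) auto

lemma ssubst_nofm:
  "\<not> fm a t \<Longrightarrow> ssubst t a ws = t"
  "\<not> fm_e a e \<Longrightarrow> ssubst_e e a ws = e"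
  by (induct t and e arbitrary: a ws and a ws) auto

lemma apps_append: "apps t (xs @ ys) = apps (apps t xs) ys"
  by (induct xs arbitrary: t) auto

lemma liftl_apps: "liftl k (apps t ws) = apps (liftl k t) (map (liftl_e k) ws)"
  by (induct ws arbitrary: t) auto
lemma liftm_apps: "liftm k (apps t ws) = apps (liftm k t) (map (liftm_e k) ws)"
  by (induct ws arbitrary: t) auto
lemma subst_apps: "subst (apps t ws) k s = apps (subst t k s) (map (\<lambda>w. subst_e w k s) ws)"
  by (induct ws arbitrary: t) auto
lemma ssubst_apps: "ssubst (apps t ws) a vs = apps (ssubst t a vs) (map (\<lambda>w. ssubst_e w a vs) ws)"
  by (induct ws arbitrary: t) auto

lemma liftl_ssubst:
  "liftl k (ssubst t a ws) = ssubst (liftl k t) a (map (liftl_e k) ws)"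
  "liftl_e k (ssubst_e e a ws) = ssubst_e (liftl_e k e) a (map (liftl_e k) ws)"
  by (induct t and e arbitrary: k a ws and k a ws)
     (auto simp: liftl_apps liftl_liftl liftl_liftm comp_def)

lemma liftm_ssubst:
  "liftm k (ssubst t a ws) = ssubst (liftm k t) (if a < k then a else Suc a) (map (liftm_e k) ws)"
  "liftm_e k (ssubst_e e a ws) = ssubst_e (liftm_e k e) (if a < k then a else Suc a) (map (liftm_e k) ws)"
  by (induct t and e arbitrary: k a ws and k a ws)
     (auto simp: liftm_apps liftm_liftm liftl_liftm comp_def)

lemma subst_ssubst:
  "\<not> fm a s \<Longrightarrow> subst (ssubst t a ws) k s = ssubst (subst t k s) a (map (\<lambda>w. subst_e w k s) ws)"
  "\<not> fm a s \<Longrightarrow> subst_e (ssubst_e e a ws) k s = ssubst_e (subst_e e k s) a (map (\<lambda>w. subst_e w k s) ws)"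
  by (induct t and e arbitrary: k a s ws and k a s ws)
     (auto simp: subst_apps liftl_subst1 liftm_subst fm_liftl fm_liftm ssubst_nofm comp_def)

lemma ssubst_subst:
  "ssubst (subst u k v) a ws = subst (ssubst u a (map (liftl_e k) ws)) k (ssubst v a ws)"
  "ssubst_e (subst_e e k v) a ws = subst_e (ssubst_e e a (map (liftl_e k) ws)) k (ssubst v a ws)"
  by (induct u and e arbitrary: k a v ws and k a v ws)
     (auto simp: subst_apps liftl_ssubst liftm_ssubst liftl_liftl liftl_liftm subst_liftl comp_def)

lemma ssubst_ssubst:
  "a \<noteq> b \<Longrightarrow> (\<forall>w\<in>set ws. \<not> fm_e b w) \<Longrightarrow>
   ssubst (ssubst t b vs) a ws = ssubst (ssubst t a ws) b (map (\<lambda>v. ssubst_e v a ws) vs)"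
  "a \<noteq> b \<Longrightarrow> (\<forall>w\<in>set ws. \<not> fm_e b w) \<Longrightarrow>
   ssubst_e (ssubst_e e b vs) a ws = ssubst_e (ssubst_e e a ws) b (map (\<lambda>v. ssubst_e v a ws) vs)"
  by (induct t and e arbitrary: a b vs ws and a b vs ws)
     (auto simp: ssubst_apps liftl_ssubst liftm_ssubst fm_liftl fm_liftm ssubst_nofm comp_def map_idI)

lemma ssubst_append:
  "(\<forall>w\<in>set vs. \<not> fm_e a w) \<Longrightarrow> ssubst (ssubst t a vs) a ws = ssubst t a (vs @ ws)"
  "(\<forall>w\<in>set vs. \<not> fm_e a w) \<Longrightarrow> ssubst_e (ssubst_e e a vs) a ws = ssubst_e e a (vs @ ws)"
  by (induct t and e arbitrary: a vs ws and a vs ws)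
     (auto simp: ssubst_apps fm_liftl fm_liftm ssubst_nofm comp_def map_idI apps_append)

lemma ssubst_Nil:
  "ssubst t a [] = t"
  "ssubst_e e a [] = e"
  by (induct t and e arbitrary: a and a) auto


lemma red_apps: "red X X' \<Longrightarrow> red (apps X ws) (apps X' ws)"
  by (induct ws arbitrary: X X') (auto intro: red_red_e.c_AppL)

lemma red_liftl:
  "red t t' \<Longrightarrow> red (liftl i t) (liftl i t')"
  "red_e e e' \<Longrightarrow> red_e (liftl_e i e) (liftl_e i e')"
proof (induct arbitrary: i and i rule: red_red_e.inducts)
  case (beta u v) show ?case using red_red_e.beta[of "liftl (Suc i) u" "liftl i v"]
    by (simp add: liftl_subst2)
next
  case (case1 t u1 u2) show ?case using red_red_e.case1[of "liftl i t" "liftl (Suc i) u1" "liftl (Suc i) u2"]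
    by (simp add: liftl_subst2)
next
  case (case2 t u1 u2) show ?case using red_red_e.case2[of "liftl i t" "liftl (Suc i) u1" "liftl (Suc i) u2"]
    by (simp add: liftl_subst2)
next
  case (comm t u1 u2 e) show ?case
    using red_red_e.comm[of "liftl i t" "liftl (Suc i) u1" "liftl (Suc i) u2" "liftl_e i e"]
    by (simp add: liftl_liftl)
next
  case (mu t e) show ?case using red_red_e.mu[of "liftl i t" "liftl_e i e"]
    by (simp add: liftl_ssubst liftl_liftm)
qed (auto intro: red_red_e.intros)

lemma red_liftm:
  "red t t' \<Longrightarrow> red (liftm i t) (liftm i t')"
  "red_e e e' \<Longrightarrow> red_e (liftm_e i e) (liftm_e i e')"
proof (induct arbitrary: i and i rule: red_red_e.inducts)
  case (beta u v) show ?case using red_red_e.beta[of "liftm i u" "liftm i v"]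
    by (simp add: liftm_subst)
next
  case (case1 t u1 u2) show ?case using red_red_e.case1[of "liftm i t" "liftm i u1" "liftm i u2"]
    by (simp add: liftm_subst)
next
  case (case2 t u1 u2) show ?case using red_red_e.case2[of "liftm i t" "liftm i u1" "liftm i u2"]
    by (simp add: liftm_subst)
next
  case (comm t u1 u2 e) show ?case
    using red_red_e.comm[of "liftm i t" "liftm i u1" "liftm i u2" "liftm_e i e"]
    by (simp add: liftl_liftm)
next
  case (mu t e) show ?case using red_red_e.mu[of "liftm (Suc i) t" "liftm_e i e"]
    by (simp add: liftm_ssubst liftm_liftm)
qed (auto intro: red_red_e.intros)

lemma red_subst:
  "red t t' \<Longrightarrow> red (subst t k s) (subst t' k s)"
  "red_e e e' \<Longrightarrow> red_e (subst_e e k s) (subst_e e' k s)"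
proof (induct arbitrary: k s and k s rule: red_red_e.inducts)
  case (beta u v) show ?case using red_red_e.beta[of "subst u (Suc k) (liftl 0 s)" "subst v k s"]
    by (simp add: subst_subst)
next
  case (case1 t u1 u2) show ?case
    using red_red_e.case1[of "subst t k s" "subst u1 (Suc k) (liftl 0 s)" "subst u2 (Suc k) (liftl 0 s)"]
    by (simp add: subst_subst)
next
  case (case2 t u1 u2) show ?case
    using red_red_e.case2[of "subst t k s" "subst u1 (Suc k) (liftl 0 s)" "subst u2 (Suc k) (liftl 0 s)"]
    by (simp add: subst_subst)
next
  case (comm t u1 u2 e) show ?case
    using red_red_e.comm[of "subst t k s" "subst u1 (Suc k) (liftl 0 s)" "subst u2 (Suc k) (liftl 0 s)" "subst_e e k s"]
    by (simp add: liftl_subst1)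
next
  case (mu t e) show ?case using red_red_e.mu[of "subst t k (liftm 0 s)" "subst_e e k s"]
    by (simp add: subst_ssubst fm_liftm_same liftm_subst)
qed (auto intro: red_red_e.intros)

lemma red_ssubst:
  "red t t' \<Longrightarrow> red (ssubst t a ws) (ssubst t' a ws)"
  "red_e e e' \<Longrightarrow> red_e (ssubst_e e a ws) (ssubst_e e' a ws)"
proof (induct arbitrary: a ws and a ws rule: red_red_e.inducts)
  case (beta u v) show ?case
    using red_red_e.beta[of "ssubst u a (map (liftl_e 0) ws)" "ssubst v a ws"]
    by (simp add: ssubst_subst)
next
  case (case1 t u1 u2) show ?case
    using red_red_e.case1[of "ssubst t a ws" "ssubst u1 a (map (liftl_e 0) ws)" "ssubst u2 a (map (liftl_e 0) ws)"]
    by (simp add: ssubst_subst)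
next
  case (case2 t u1 u2) show ?case
    using red_red_e.case2[of "ssubst t a ws" "ssubst u1 a (map (liftl_e 0) ws)" "ssubst u2 a (map (liftl_e 0) ws)"]
    by (simp add: ssubst_subst)
next
  case (comm t u1 u2 e) show ?case
    using red_red_e.comm[of "ssubst t a ws" "ssubst u1 a (map (liftl_e 0) ws)" "ssubst u2 a (map (liftl_e 0) ws)" "ssubst_e e a ws"]
    by (simp add: liftl_ssubst)
next
  case (mu t e) show ?case
    using red_red_e.mu[of "ssubst t (Suc a) (map (liftm_e 0) ws)" "ssubst_e e a ws"]
    by (simp add: ssubst_ssubst fm_liftm_same liftm_ssubst)
next
  case (c_Named t t' b) thus ?case by (auto intro: red_red_e.intros red_apps)
qed (auto intro: red_red_e.intros)


lemma rtp_map: assumes "\<And>x y. P x y \<Longrightarrow> Q (f x) (f y)" "P\<^sup>*\<^sup>* a b" shows "Q\<^sup>*\<^sup>* (f a) (f b)"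
  using assms(2) by (induct rule: rtranclp_induct) (auto intro: rtranclp.rtrancl_into_rtrancl assms(1))

lemma rs_Lam: "red\<^sup>*\<^sup>* t t' \<Longrightarrow> red\<^sup>*\<^sup>* (Lam t) (Lam t')"
  by (rule rtp_map[where f=Lam]) (auto intro: red_red_e.intros)
lemma rs_Mu: "red\<^sup>*\<^sup>* t t' \<Longrightarrow> red\<^sup>*\<^sup>* (Mu t) (Mu t')"
  by (rule rtp_map[where f=Mu]) (auto intro: red_red_e.intros)
lemma rs_Inj1: "red\<^sup>*\<^sup>* t t' \<Longrightarrow> red\<^sup>*\<^sup>* (Inj1 t) (Inj1 t')"
  by (rule rtp_map[where f=Inj1]) (auto intro: red_red_e.intros)
lemma rs_Inj2: "red\<^sup>*\<^sup>* t t' \<Longrightarrow> red\<^sup>*\<^sup>* (Inj2 t) (Inj2 t')"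
  by (rule rtp_map[where f=Inj2]) (auto intro: red_red_e.intros)
lemma rs_Named: "red\<^sup>*\<^sup>* t t' \<Longrightarrow> red\<^sup>*\<^sup>* (Named b t) (Named b t')"
  by (rule rtp_map[where f="Named b"]) (auto intro: red_red_e.intros)
lemma rs_Arg: "red\<^sup>*\<^sup>* t t' \<Longrightarrow> red_e\<^sup>*\<^sup>* (Arg t) (Arg t')"
  by (rule rtp_map[where f=Arg]) (auto intro: red_red_e.intros)
lemma rs_Pair: "red\<^sup>*\<^sup>* t t' \<Longrightarrow> red\<^sup>*\<^sup>* u u' \<Longrightarrow> red\<^sup>*\<^sup>* (trm.Pair t u) (trm.Pair t' u')"
proof -
  assume a: "red\<^sup>*\<^sup>* t t'" "red\<^sup>*\<^sup>* u u'"
  have "red\<^sup>*\<^sup>* (trm.Pair t u) (trm.Pair t' u)"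
    by (rule rtp_map[where f="\<lambda>x. trm.Pair x u", OF _ a(1)]) (auto intro: red_red_e.intros)
  moreover have "red\<^sup>*\<^sup>* (trm.Pair t' u) (trm.Pair t' u')"
    by (rule rtp_map[where f="\<lambda>x. trm.Pair t' x", OF _ a(2)]) (auto intro: red_red_e.intros)
  ultimately show ?thesis by simp
qed
lemma rs_Case: "red\<^sup>*\<^sup>* t t' \<Longrightarrow> red\<^sup>*\<^sup>* u u' \<Longrightarrow> red_e\<^sup>*\<^sup>* (Case t u) (Case t' u')"
proof -
  assume a: "red\<^sup>*\<^sup>* t t'" "red\<^sup>*\<^sup>* u u'"
  have "red_e\<^sup>*\<^sup>* (Case t u) (Case t' u)"
    by (rule rtp_map[where f="\<lambda>x. Case x u", OF _ a(1)]) (auto intro: red_red_e.intros)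
  moreover have "red_e\<^sup>*\<^sup>* (Case t' u) (Case t' u')"
    by (rule rtp_map[where f="\<lambda>x. Case t' x", OF _ a(2)]) (auto intro: red_red_e.intros)
  ultimately show ?thesis by simp
qed
lemma rs_App: "red\<^sup>*\<^sup>* t t' \<Longrightarrow> red_e\<^sup>*\<^sup>* u u' \<Longrightarrow> red\<^sup>*\<^sup>* (App t u) (App t' u')"
proof -
  assume a: "red\<^sup>*\<^sup>* t t'" "red_e\<^sup>*\<^sup>* u u'"
  have "red\<^sup>*\<^sup>* (App t u) (App t' u)"
    by (rule rtp_map[where f="\<lambda>x. App x u", OF _ a(1)]) (auto intro: red_red_e.intros)
  moreover have "red\<^sup>*\<^sup>* (App t' u) (App t' u')"
    by (rule rtp_map[where f="\<lambda>x. App t' x", OF _ a(2)]) (auto intro: red_red_e.intros)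
  ultimately show ?thesis by simp
qed

lemma red_subst_arg:
  "red s s' \<Longrightarrow> red\<^sup>*\<^sup>* (subst t k s) (subst t k s')"
  "red s s' \<Longrightarrow> red_e\<^sup>*\<^sup>* (subst_e e k s) (subst_e e k s')"
proof (induct t and e arbitrary: k s s' and k s s')
  case (Lam x) thus ?case by (auto intro!: rs_Lam Lam(1) red_liftl)
next
  case (Mu x) thus ?case by (auto intro!: rs_Mu Mu(1) red_liftm)
next
  case (Case x1 x2) thus ?case by (auto intro!: rs_Case Case(1,2) red_liftl)
qed (auto intro: rs_Lam rs_Mu rs_Inj1 rs_Inj2 rs_Named rs_Arg rs_Pair rs_Case rs_App red_liftl red_liftm)

inductive redl :: "elim list \<Rightarrow> elim list \<Rightarrow> bool" where
  redl_hd: "red_e w w' \<Longrightarrow> redl (w # ws) (w' # ws)"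
| redl_tl: "redl ws ws' \<Longrightarrow> redl (w # ws) (w # ws')"

lemma redl_map: assumes "\<And>x y. red_e x y \<Longrightarrow> red_e (f x) (f y)" "redl ws ws'" shows "redl (map f ws) (map f ws')"
  using assms(2) by (induct rule: redl.induct) (auto intro: redl.intros assms(1))

lemma redl_apps: "redl ws ws' \<Longrightarrow> red (apps X ws) (apps X ws')"
  by (induct arbitrary: X rule: redl.induct) (auto intro: red_apps red_red_e.c_AppR)

lemma rs_apps: "red\<^sup>*\<^sup>* X X' \<Longrightarrow> red\<^sup>*\<^sup>* (apps X ws) (apps X' ws)"
  by (rule rtp_map[where f="\<lambda>x. apps x ws"]) (auto intro: red_apps)

lemma red_ssubst_arg:
  "redl ws ws' \<Longrightarrow> red\<^sup>*\<^sup>* (ssubst t a ws) (ssubst t a ws')"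
  "redl ws ws' \<Longrightarrow> red_e\<^sup>*\<^sup>* (ssubst_e e a ws) (ssubst_e e a ws')"
proof (induct t and e arbitrary: a ws ws' and a ws ws')
  case (Named b t)
  show ?case
  proof (cases "b = a")
    case True
    have "red\<^sup>*\<^sup>* (apps (ssubst t a ws) ws) (apps (ssubst t a ws') ws)"
      by (rule rs_apps) (rule Named(1)[OF Named(2)])
    also have "red (apps (ssubst t a ws') ws) (apps (ssubst t a ws') ws')"
      by (rule redl_apps[OF Named(2)])
    finally show ?thesis using True by (simp add: rs_Named)
  next
    case False thus ?thesis using Named by (simp add: rs_Named)
  qed
next
  case (Lam x) thus ?case by (auto intro!: rs_Lam Lam(1) redl_map red_liftl)
next
  case (Mu x) thus ?case by (auto intro!: rs_Mu Mu(1) redl_map red_liftm)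
next
  case (Case x1 x2) thus ?case by (auto intro!: rs_Case Case(1,2) redl_map red_liftl)
qed (auto intro: rs_Lam rs_Mu rs_Inj1 rs_Inj2 rs_Named rs_Arg rs_Pair rs_Case rs_App
       redl_map red_liftl red_liftm)



inductive SNr :: "('a \<Rightarrow> 'a \<Rightarrow> bool) \<Rightarrow> 'a \<Rightarrow> bool" for r where
  SNI: "(\<And>y. r x y \<Longrightarrow> SNr r y) \<Longrightarrow> SNr r x"

lemma SNr_step: "SNr r x \<Longrightarrow> r x y \<Longrightarrow> SNr r y"
  by (erule SNr.cases) auto

lemma SNr_steps: "r\<^sup>*\<^sup>* x y \<Longrightarrow> SNr r x \<Longrightarrow> SNr r y"
  by (induct rule: rtranclp_induct) (auto intro: SNr_step)

lemma SNr_noinf: "SNr r x \<Longrightarrow> \<not> (\<exists>f. f 0 = x \<and> (\<forall>n. r (f n) (f (Suc n))))"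
proof (induct rule: SNr.induct)
  case (SNI x)
  show ?case
  proof
    assume "\<exists>f. f 0 = x \<and> (\<forall>n. r (f n) (f (Suc n)))"
    then obtain f where f: "f 0 = x" "\<forall>n. r (f n) (f (Suc n))" by blast
    have rx: "r x (f (Suc 0))" using f(2)[rule_format, of 0] f(1) by simp
    have "\<exists>g. g 0 = f (Suc 0) \<and> (\<forall>n. r (g n) (g (Suc n)))"
      by (rule exI[of _ "\<lambda>n. f (Suc n)"]) (simp add: f(2))
    with SNI(2)[OF rx] show False by (rule notE)
  qed
qed

lemma noinf_SNr:
  assumes "\<not> (\<exists>f. f 0 = x \<and> (\<forall>n. r (f n) (f (Suc n))))" shows "SNr r x"
proof (rule ccontr)
  assume nx: "\<not> SNr r x"
  define g where "g = (\<lambda>s. SOME s'. r s s' \<and> \<not> SNr r s')"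
  have step: "r s (g s) \<and> \<not> SNr r (g s)" if ns: "\<not> SNr r s" for s
  proof -
    have "\<exists>s'. r s s' \<and> \<not> SNr r s'"
    proof (rule ccontr)
      assume "\<not> (\<exists>s'. r s s' \<and> \<not> SNr r s')"
      hence "\<And>y. r s y \<Longrightarrow> SNr r y" by blast
      hence "SNr r s" by (rule SNr.SNI)
      with ns show False by simp
    qed
    thus ?thesis unfolding g_def by (rule someI_ex)
  qed
  define f where "f n = (g ^^ n) x" for n
  have nf: "\<not> SNr r (f n)" for n
  proof (induct n)
    case 0 thus ?case using nx by (simp add: f_def)
  next
    case (Suc n) thus ?case using step[of "f n"] by (simp add: f_def)
  qed
  have "r (f n) (f (Suc n))" for n using step[OF nf[of n]] by (simp add: f_def)
  moreover have "f 0 = x" by (simp add: f_def)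
  ultimately have "\<exists>f. f 0 = x \<and> (\<forall>n. r (f n) (f (Suc n)))" by blast
  with assms show False by (rule notE)
qed

lemma SNr_map_aux: "SNr r' z \<Longrightarrow> (\<And>x y. r x y \<Longrightarrow> r' (f x) (f y)) \<Longrightarrow> z = f x \<Longrightarrow> SNr r x"
proof (induct arbitrary: x rule: SNr.induct)
  case (SNI z x)
  show ?case
  proof (rule SNr.SNI)
    fix y assume "r x y"
    hence "r' z (f y)" using SNI(3,4) by simp
    thus "SNr r y" using SNI(2)[of "f y" y] SNI(3) by simp
  qed
qed

lemma SNr_map: assumes a: "\<And>x y. r x y \<Longrightarrow> r' (f x) (f y)" and b: "SNr r' (f x)" shows "SNr r x"
  by (rule SNr_map_aux[of r' "f x" r f x, OF b a refl])

definition prodr :: "('a \<Rightarrow> 'a \<Rightarrow> bool) \<Rightarrow> ('b \<Rightarrow> 'b \<Rightarrow> bool) \<Rightarrow> 'a \<times> 'b \<Rightarrow> 'a \<times> 'b \<Rightarrow> bool" where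
  "prodr r1 r2 p q \<longleftrightarrow> (r1 (fst p) (fst q) \<and> snd q = snd p) \<or> (fst q = fst p \<and> r2 (snd p) (snd q))"

lemma SNr_prod: "SNr r1 a \<Longrightarrow> SNr r2 b \<Longrightarrow> SNr (prodr r1 r2) (a, b)"
proof (induct arbitrary: b rule: SNr.induct)
  case (SNI a b)
  have IHa: "\<And>a' b. r1 a a' \<Longrightarrow> SNr r2 b \<Longrightarrow> SNr (prodr r1 r2) (a', b)" by (rule SNI(2))
  from SNI(3) show ?case
  proof (induct rule: SNr.induct)
    case (SNI b)
    show ?case
    proof (rule SNr.SNI)
      fix q assume "prodr r1 r2 (a, b) q"
      then obtain a' b' where q: "q = (a', b')" and
        c: "(r1 a a' \<and> b' = b) \<or> (a' = a \<and> r2 b b')"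
        unfolding prodr_def by (cases q) auto
      from c show "SNr (prodr r1 r2) q"
      proof
        assume h: "r1 a a' \<and> b' = b"
        have "SNr r2 b" using SNI(1) by (rule SNr.SNI)
        thus ?thesis using IHa[of a' b] h q by simp
      next
        assume "a' = a \<and> r2 b b'"
        thus ?thesis using SNI(2) q by simp
      qed
    qed
  qed
qed



lemma SNr_cons: assumes "SNr red_e w" "SNr redl ws" shows "SNr redl (w # ws)"
proof -
  have "SNr (prodr red_e redl) (w, ws)" using assms by (rule SNr_prod)
  hence h: "SNr (prodr red_e redl) ((\<lambda>l. (hd l, tl l)) (w # ws))" by simp
  have m: "prodr red_e redl ((\<lambda>l. (hd l, tl l)) x) ((\<lambda>l. (hd l, tl l)) y)" if "redl x y" for x y
    using that by (cases rule: redl.cases) (auto simp: prodr_def)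
  show ?thesis by (rule SNr_map[of redl "prodr red_e redl" "\<lambda>l. (hd l, tl l)", OF m h])
qed

lemma SNr_list: "(\<forall>w\<in>set ws. SNr red_e w) \<Longrightarrow> SNr redl ws"
proof (induct ws)
  case Nil show ?case by (rule SNr.SNI) (auto elim: redl.cases)
next
  case (Cons w ws) thus ?case by (auto intro: SNr_cons)
qed

inductive topred :: "trm \<Rightarrow> trm \<Rightarrow> bool" where
  "topred (App (Lam u) (Arg v)) (subst u 0 v)"
| "topred (App (trm.Pair t1 t2) Proj1) t1"
| "topred (App (trm.Pair t1 t2) Proj2) t2"
| "topred (App (Inj1 t) (Case u1 u2)) (subst u1 0 t)"
| "topred (App (Inj2 t) (Case u1 u2)) (subst u2 0 t)"
| "topred (App (App t (Case u1 u2)) e)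
             (App t (Case (App u1 (liftl_e 0 e)) (App u2 (liftl_e 0 e))))"
| "topred (App (Mu t) e) (Mu (ssubst t 0 [liftm_e 0 e]))"

lemma red_App_cases: "red (App H w) X \<Longrightarrow> topred (App H w) X \<or> (\<exists>H'. red H H' \<and> X = App H' w) \<or> (\<exists>w'. red_e w w' \<and> X = App H w')"
  by (erule red.cases) (auto intro: topred.intros)

definition nc :: "elim list \<Rightarrow> bool" where
  "nc ws \<longleftrightarrow> (\<forall>i. i + 1 < length ws \<longrightarrow> \<not> is_case (ws ! i))"

lemma red_e_is_case: "red_e w w' \<Longrightarrow> is_case w' = is_case w"
  by (erule red_e.cases) (auto simp: is_case_def)

lemma redl_aux: "redl ws ws' \<Longrightarrow> length ws' = length ws \<and> (\<forall>i<length ws. is_case (ws' ! i) = is_case (ws ! i))"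
proof (induct rule: redl.induct)
  case (redl_hd w w' ws) thus ?case by (auto simp: nth_Cons' red_e_is_case)
next
  case (redl_tl ws ws' w) thus ?case by (auto simp: nth_Cons')
qed

lemma redl_nc: assumes "redl ws ws'" "nc ws" shows "nc ws'"
  unfolding nc_def
proof (intro allI impI)
  fix i assume i: "i + 1 < length ws'"
  from redl_aux[OF assms(1)] have l: "length ws' = length ws"
    and c: "\<forall>i<length ws. is_case (ws' ! i) = is_case (ws ! i)" by auto
  from i l have "i + 1 < length ws" by simp
  with assms(2) have "\<not> is_case (ws ! i)" unfolding nc_def by blast
  with c i l show "\<not> is_case (ws' ! i)" by simp
qed

lemma redl_length: "redl ws ws' \<Longrightarrow> length ws' = length ws"
  using redl_aux by blast

lemma nc_tl: assumes "nc (w # ws)" shows "nc ws"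
  unfolding nc_def
proof (intro allI impI)
  fix i assume "i + 1 < length ws"
  hence "Suc i + 1 < length (w # ws)" by simp
  with assms have "\<not> is_case ((w # ws) ! Suc i)" unfolding nc_def by blast
  thus "\<not> is_case (ws ! i)" by simp
qed

lemma nc_hd: assumes "nc (w # ws)" "ws \<noteq> []" shows "\<not> is_case w"
proof -
  have "0 + 1 < length (w # ws)" using assms(2) by (cases ws) auto
  with assms(1) have "\<not> is_case ((w # ws) ! 0)" unfolding nc_def by blast
  thus ?thesis by simp
qed

lemma topred_AppApp: "topred (App (App H w) w2) X \<Longrightarrow> is_case w"
  by (erule topred.cases) (auto simp: is_case_def)

lemma AppsInv: "nc ws \<Longrightarrow> red (apps H ws) N \<Longrightarrow>
   (\<exists>H'. red H H' \<and> N = apps H' ws) \<or> (\<exists>ws'. redl ws ws' \<and> N = apps H ws') \<or>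
   (\<exists>w ws0 H'. ws = w # ws0 \<and> topred (App H w) H' \<and> N = apps H' ws0)"
proof (induct ws arbitrary: H)
  case Nil thus ?case by simp
next
  case (Cons w ws H)
  have nct: "nc ws" using Cons(2) by (rule nc_tl)
  from Cons(1)[OF nct] Cons(3) have
    "(\<exists>H'. red (App H w) H' \<and> N = apps H' ws) \<or> (\<exists>ws'. redl ws ws' \<and> N = apps (App H w) ws') \<or>
     (\<exists>w2 ws0 H'. ws = w2 # ws0 \<and> topred (App (App H w) w2) H' \<and> N = apps H' ws0)" by simp
  thus ?case
  proof (elim disjE exE conjE)
    fix H' assume r: "red (App H w) H'" and n: "N = apps H' ws"
    from red_App_cases[OF r] show ?thesis
      using n by (auto intro: redl.intros)
  next
    fix ws' assume "redl ws ws'" "N = apps (App H w) ws'"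
    thus ?thesis by (auto intro: redl.intros)
  next
    fix w2 ws0 H' assume "ws = w2 # ws0" "topred (App (App H w) w2) H'"
    hence "is_case w" "ws \<noteq> []" by (auto dest: topred_AppApp)
    with nc_hd[OF Cons(2)] show ?thesis by simp
  qed
qed



lemma topred_App_not_case: "topred (App (App H w) w2) X \<Longrightarrow> \<not> is_case w \<Longrightarrow> False"
  using topred_AppApp by blast

lemma part1: "SNr redl ws \<Longrightarrow> nc ws \<Longrightarrow> SNr red (apps (Var x) ws)"
proof (induct rule: SNr.induct)
  case (SNI ws)
  show ?case
  proof (rule SNr.SNI)
    fix N assume "red (apps (Var x) ws) N"
    from AppsInv[OF SNI(3) this] show "SNr red N"
    proof (elim disjE exE conjE)
      fix H' assume "red (Var x) H'" thus ?thesis by (auto elim: red.cases)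
    next
      fix ws' assume "redl ws ws'" "N = apps (Var x) ws'"
      thus ?thesis using SNI(2) redl_nc[OF _ SNI(3)] by blast
    next
      fix w ws0 H' assume "topred (App (Var x) w) H'" thus ?thesis by (auto elim: topred.cases)
    qed
  qed
qed

lemma part2: "SNr (prodr red (prodr red redl)) p \<Longrightarrow> p = (t, u, ws) \<Longrightarrow> nc ws \<Longrightarrow>
   SNr red (apps (subst t 0 u) ws) \<Longrightarrow> SNr red (apps (App (Lam t) (Arg u)) ws)"
proof (induct arbitrary: t u ws rule: SNr.induct)
  case (SNI p t u ws)
  note IH = SNI(2)
  show ?case
  proof (rule SNr.SNI)
    fix N assume "red (apps (App (Lam t) (Arg u)) ws) N"
    from AppsInv[OF SNI(4) this] show "SNr red N"
    proof (elim disjE exE conjE)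
      fix H' assume r: "red (App (Lam t) (Arg u)) H'" and n: "N = apps H' ws"
      from red_App_cases[OF r] show ?thesis
      proof (elim disjE exE conjE)
        assume "topred (App (Lam t) (Arg u)) H'"
        hence "H' = subst t 0 u" by (cases rule: topred.cases) auto
        thus ?thesis using n SNI(5) by simp
      next
        fix H'' assume r2: "red (Lam t) H''" and h: "H' = App H'' (Arg u)"
        from r2 obtain t' where t': "red t t'" "H'' = Lam t'" by (cases rule: red.cases) auto
        have "SNr red (apps (subst t' 0 u) ws)"
          using SNI(5) red_apps[OF red_subst(1)[OF t'(1)]] by (rule SNr_step)
        moreover have "prodr red (prodr red redl) p (t', u, ws)" using SNI(3) t' by (simp add: prodr_def)
        ultimately show ?thesis using IH[of "(t', u, ws)" t' u ws] SNI(4) n h t' by simp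
      next
        fix w' assume r2: "red_e (Arg u) w'" and h: "H' = App (Lam t) w'"
        from r2 obtain u' where u': "red u u'" "w' = Arg u'" by (cases rule: red_e.cases) auto
        have "SNr red (apps (subst t 0 u') ws)"
          using rs_apps[OF red_subst_arg(1)[OF u'(1)]] SNI(5) by (rule SNr_steps)
        moreover have "prodr red (prodr red redl) p (t, u', ws)" using SNI(3) u' by (simp add: prodr_def)
        ultimately show ?thesis using IH[of "(t, u', ws)" t u' ws] SNI(4) n h u' by simp
      qed
    next
      fix ws' assume l: "redl ws ws'" and n: "N = apps (App (Lam t) (Arg u)) ws'"
      have "SNr red (apps (subst t 0 u) ws')" using SNI(5) redl_apps[OF l] by (rule SNr_step)
      moreover have "prodr red (prodr red redl) p (t, u, ws')" using SNI(3) l by (simp add: prodr_def)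
      ultimately show ?thesis using IH[of "(t, u, ws')" t u ws'] redl_nc[OF l SNI(4)] n by simp
    next
      fix w ws0 H' assume "topred (App (App (Lam t) (Arg u)) w) H'"
      thus ?thesis using topred_App_not_case by (auto simp: is_case_def)
    qed
  qed
qed

lemma part3a: "SNr (prodr red (prodr red redl)) p \<Longrightarrow> p = (t1, t2, ws) \<Longrightarrow> nc ws \<Longrightarrow>
   SNr red (apps t1 ws) \<Longrightarrow> SNr red (apps (App (trm.Pair t1 t2) Proj1) ws)"
proof (induct arbitrary: t1 t2 ws rule: SNr.induct)
  case (SNI p t1 t2 ws)
  note IH = SNI(2)
  show ?case
  proof (rule SNr.SNI)
    fix N assume "red (apps (App (trm.Pair t1 t2) Proj1) ws) N"
    from AppsInv[OF SNI(4) this] show "SNr red N"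
    proof (elim disjE exE conjE)
      fix H' assume r: "red (App (trm.Pair t1 t2) Proj1) H'" and n: "N = apps H' ws"
      from red_App_cases[OF r] show ?thesis
      proof (elim disjE exE conjE)
        assume "topred (App (trm.Pair t1 t2) Proj1) H'"
        hence "H' = t1" by (cases rule: topred.cases) auto
        thus ?thesis using n SNI(5) by simp
      next
        fix H'' assume r2: "red (trm.Pair t1 t2) H''" and h: "H' = App H'' Proj1"
        from r2 consider (a) t1' where "red t1 t1'" "H'' = trm.Pair t1' t2"
          | (b) t2' where "red t2 t2'" "H'' = trm.Pair t1 t2'" by (cases rule: red.cases) auto
        thus ?thesis
        proof cases
          case a
          have "SNr red (apps t1' ws)" using SNI(5) red_apps[OF a(1)] by (rule SNr_step)
          moreover have "prodr red (prodr red redl) p (t1', t2, ws)" using SNI(3) a by (simp add: prodr_def)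
          ultimately show ?thesis using IH[of "(t1', t2, ws)" t1' t2 ws] SNI(4) n h a by simp
        next
          case b
          have "prodr red (prodr red redl) p (t1, t2', ws)" using SNI(3) b by (simp add: prodr_def)
          thus ?thesis using IH[of "(t1, t2', ws)" t1 t2' ws] SNI(4,5) n h b by simp
        qed
      next
        fix w' assume r2: "red_e Proj1 w'" thus ?thesis by (auto elim: red_e.cases)
      qed
    next
      fix ws' assume l: "redl ws ws'" and n: "N = apps (App (trm.Pair t1 t2) Proj1) ws'"
      have "SNr red (apps t1 ws')" using SNI(5) redl_apps[OF l] by (rule SNr_step)
      moreover have "prodr red (prodr red redl) p (t1, t2, ws')" using SNI(3) l by (simp add: prodr_def)
      ultimately show ?thesis using IH[of "(t1, t2, ws')" t1 t2 ws'] redl_nc[OF l SNI(4)] n by simp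
    next
      fix w ws0 H' assume "topred (App (App (trm.Pair t1 t2) Proj1) w) H'"
      thus ?thesis using topred_App_not_case by (auto simp: is_case_def)
    qed
  qed
qed

lemma part3b: "SNr (prodr red (prodr red redl)) p \<Longrightarrow> p = (t1, t2, ws) \<Longrightarrow> nc ws \<Longrightarrow>
   SNr red (apps t2 ws) \<Longrightarrow> SNr red (apps (App (trm.Pair t1 t2) Proj2) ws)"
proof (induct arbitrary: t1 t2 ws rule: SNr.induct)
  case (SNI p t1 t2 ws)
  note IH = SNI(2)
  show ?case
  proof (rule SNr.SNI)
    fix N assume "red (apps (App (trm.Pair t1 t2) Proj2) ws) N"
    from AppsInv[OF SNI(4) this] show "SNr red N"
    proof (elim disjE exE conjE)
      fix H' assume r: "red (App (trm.Pair t1 t2) Proj2) H'" and n: "N = apps H' ws"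
      from red_App_cases[OF r] show ?thesis
      proof (elim disjE exE conjE)
        assume "topred (App (trm.Pair t1 t2) Proj2) H'"
        hence "H' = t2" by (cases rule: topred.cases) auto
        thus ?thesis using n SNI(5) by simp
      next
        fix H'' assume r2: "red (trm.Pair t1 t2) H''" and h: "H' = App H'' Proj2"
        from r2 consider (a) t1' where "red t1 t1'" "H'' = trm.Pair t1' t2"
          | (b) t2' where "red t2 t2'" "H'' = trm.Pair t1 t2'" by (cases rule: red.cases) auto
        thus ?thesis
        proof cases
          case b
          have "SNr red (apps t2' ws)" using SNI(5) red_apps[OF b(1)] by (rule SNr_step)
          moreover have "prodr red (prodr red redl) p (t1, t2', ws)" using SNI(3) b by (simp add: prodr_def)
          ultimately show ?thesis using IH[of "(t1, t2', ws)" t1 t2' ws] SNI(4) n h b by simp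
        next
          case a
          have "prodr red (prodr red redl) p (t1', t2, ws)" using SNI(3) a by (simp add: prodr_def)
          thus ?thesis using IH[of "(t1', t2, ws)" t1' t2 ws] SNI(4,5) n h a by simp
        qed
      next
        fix w' assume r2: "red_e Proj2 w'" thus ?thesis by (auto elim: red_e.cases)
      qed
    next
      fix ws' assume l: "redl ws ws'" and n: "N = apps (App (trm.Pair t1 t2) Proj2) ws'"
      have "SNr red (apps t2 ws')" using SNI(5) redl_apps[OF l] by (rule SNr_step)
      moreover have "prodr red (prodr red redl) p (t1, t2, ws')" using SNI(3) l by (simp add: prodr_def)
      ultimately show ?thesis using IH[of "(t1, t2, ws')" t1 t2 ws'] redl_nc[OF l SNI(4)] n by simp
    next
      fix w ws0 H' assume "topred (App (App (trm.Pair t1 t2) Proj2) w) H'"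
      thus ?thesis using topred_App_not_case by (auto simp: is_case_def)
    qed
  qed
qed



lemma part4a: "SNr (prodr red (prodr red red)) p \<Longrightarrow> p = (t, u1, u2) \<Longrightarrow>
   SNr red (subst u1 0 t) \<Longrightarrow> SNr red (App (Inj1 t) (Case u1 u2))"
proof (induct arbitrary: t u1 u2 rule: SNr.induct)
  case (SNI p t u1 u2)
  note IH = SNI(2)
  show ?case
  proof (rule SNr.SNI)
    fix N assume r: "red (App (Inj1 t) (Case u1 u2)) N"
    from red_App_cases[OF r] show "SNr red N"
    proof (elim disjE exE conjE)
      assume "topred (App (Inj1 t) (Case u1 u2)) N"
      hence "N = subst u1 0 t" by (cases rule: topred.cases) auto
      thus ?thesis using SNI(4) by simp
    next
      fix H'' assume r2: "red (Inj1 t) H''" and h: "N = App H'' (Case u1 u2)"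
      from r2 obtain t' where t': "red t t'" "H'' = Inj1 t'" by (cases rule: red.cases) auto
      have "SNr red (subst u1 0 t')" using red_subst_arg(1)[OF t'(1)] SNI(4) by (rule SNr_steps)
      moreover have "prodr red (prodr red red) p (t', u1, u2)" using SNI(3) t' by (simp add: prodr_def)
      ultimately show ?thesis using IH[of "(t', u1, u2)" t' u1 u2] h t' by simp
    next
      fix w' assume r2: "red_e (Case u1 u2) w'" and h: "N = App (Inj1 t) w'"
      from r2 consider (a) u1' where "red u1 u1'" "w' = Case u1' u2"
          | (b) u2' where "red u2 u2'" "w' = Case u1 u2'" by (cases rule: red_e.cases) auto
      thus ?thesis
      proof cases
        case a
        have "SNr red (subst u1' 0 t)" using SNI(4) red_subst(1)[OF a(1)] by (rule SNr_step)
        moreover have "prodr red (prodr red red) p (t, u1', u2)" using SNI(3) a by (simp add: prodr_def)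
        ultimately show ?thesis using IH[of "(t, u1', u2)" t u1' u2] h a by simp
      next
        case b
        have "prodr red (prodr red red) p (t, u1, u2')" using SNI(3) b by (simp add: prodr_def)
        thus ?thesis using IH[of "(t, u1, u2')" t u1 u2'] SNI(4) h b by simp
      qed
    qed
  qed
qed

lemma part4b: "SNr (prodr red (prodr red red)) p \<Longrightarrow> p = (t, u1, u2) \<Longrightarrow>
   SNr red (subst u2 0 t) \<Longrightarrow> SNr red (App (Inj2 t) (Case u1 u2))"
proof (induct arbitrary: t u1 u2 rule: SNr.induct)
  case (SNI p t u1 u2)
  note IH = SNI(2)
  show ?case
  proof (rule SNr.SNI)
    fix N assume r: "red (App (Inj2 t) (Case u1 u2)) N"
    from red_App_cases[OF r] show "SNr red N"
    proof (elim disjE exE conjE)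
      assume "topred (App (Inj2 t) (Case u1 u2)) N"
      hence "N = subst u2 0 t" by (cases rule: topred.cases) auto
      thus ?thesis using SNI(4) by simp
    next
      fix H'' assume r2: "red (Inj2 t) H''" and h: "N = App H'' (Case u1 u2)"
      from r2 obtain t' where t': "red t t'" "H'' = Inj2 t'" by (cases rule: red.cases) auto
      have "SNr red (subst u2 0 t')" using red_subst_arg(1)[OF t'(1)] SNI(4) by (rule SNr_steps)
      moreover have "prodr red (prodr red red) p (t', u1, u2)" using SNI(3) t' by (simp add: prodr_def)
      ultimately show ?thesis using IH[of "(t', u1, u2)" t' u1 u2] h t' by simp
    next
      fix w' assume r2: "red_e (Case u1 u2) w'" and h: "N = App (Inj2 t) w'"
      from r2 consider (a) u1' where "red u1 u1'" "w' = Case u1' u2"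
          | (b) u2' where "red u2 u2'" "w' = Case u1 u2'" by (cases rule: red_e.cases) auto
      thus ?thesis
      proof cases
        case b
        have "SNr red (subst u2' 0 t)" using SNI(4) red_subst(1)[OF b(1)] by (rule SNr_step)
        moreover have "prodr red (prodr red red) p (t, u1, u2')" using SNI(3) b by (simp add: prodr_def)
        ultimately show ?thesis using IH[of "(t, u1, u2')" t u1 u2'] h b by simp
      next
        case a
        have "prodr red (prodr red red) p (t, u1', u2)" using SNI(3) a by (simp add: prodr_def)
        thus ?thesis using IH[of "(t, u1', u2)" t u1' u2] SNI(4) h a by simp
      qed
    qed
  qed
qed

lemma SNr_tl: "SNr redl (w # ws) \<Longrightarrow> SNr redl ws"
  by (rule SNr_map[of redl redl "Cons w"]) (auto intro: redl.intros)

lemma part5_inner: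
  assumes OUT: "\<And>ws t. length ws < n \<Longrightarrow> nc ws \<Longrightarrow> SNr redl ws \<Longrightarrow>
       SNr red (ssubst t 0 (map (liftm_e 0) ws)) \<Longrightarrow> SNr red (apps (Mu t) ws)"
  shows "SNr (prodr red redl) p \<Longrightarrow> p = (t, ws) \<Longrightarrow> length ws = n \<Longrightarrow> nc ws \<Longrightarrow> SNr redl ws \<Longrightarrow>
       SNr red (ssubst t 0 (map (liftm_e 0) ws)) \<Longrightarrow> SNr red (apps (Mu t) ws)"
proof (induct arbitrary: t ws rule: SNr.induct)
  case (SNI p t ws)
  note IH = SNI(2)
  show ?case
  proof (rule SNr.SNI)
    fix N assume "red (apps (Mu t) ws) N"
    from AppsInv[OF SNI(5) this] show "SNr red N"
    proof (elim disjE exE conjE)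
      fix H' assume r: "red (Mu t) H'" and n: "N = apps H' ws"
      from r obtain t' where t': "red t t'" "H' = Mu t'" by (cases rule: red.cases) auto
      have "SNr red (ssubst t' 0 (map (liftm_e 0) ws))" using SNI(7) red_ssubst(1)[OF t'(1)] by (rule SNr_step)
      moreover have "prodr red redl p (t', ws)" using SNI(3) t' by (simp add: prodr_def)
      ultimately show ?thesis using IH[of "(t', ws)" t' ws] SNI(4,5,6) n t' by simp
    next
      fix ws' assume l: "redl ws ws'" and n: "N = apps (Mu t) ws'"
      have l2: "redl (map (liftm_e 0) ws) (map (liftm_e 0) ws')" by (rule redl_map[OF red_liftm(2) l])
      have "SNr red (ssubst t 0 (map (liftm_e 0) ws'))" using red_ssubst_arg(1)[OF l2] SNI(7) by (rule SNr_steps)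
      moreover have "prodr red redl p (t, ws')" using SNI(3) l by (simp add: prodr_def)
      moreover have "SNr redl ws'" using SNI(6) l by (rule SNr_step)
      ultimately show ?thesis using IH[of "(t, ws')" t ws'] SNI(4) redl_nc[OF l SNI(5)] redl_length[OF l] n by simp
    next
      fix w ws0 H' assume ws: "ws = w # ws0" and tp: "topred (App (Mu t) w) H'" and n: "N = apps H' ws0"
      from tp have h: "H' = Mu (ssubst t 0 [liftm_e 0 w])" by (cases rule: topred.cases) auto
      have "ssubst (ssubst t 0 [liftm_e 0 w]) 0 (map (liftm_e 0) ws0) = ssubst t 0 ([liftm_e 0 w] @ map (liftm_e 0) ws0)"
        by (rule ssubst_append(1)) (simp add: fm_liftm_same)
      hence "SNr red (ssubst (ssubst t 0 [liftm_e 0 w]) 0 (map (liftm_e 0) ws0))" using SNI(7) ws by simp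
      moreover have "length ws0 < n" using SNI(4) ws by simp
      moreover have "nc ws0" using SNI(5) ws nc_tl by simp
      moreover have "SNr redl ws0" using SNI(6) ws SNr_tl by simp
      ultimately show ?thesis using OUT h n by simp
    qed
  qed
qed

lemma part5: "length ws = n \<Longrightarrow> nc ws \<Longrightarrow> SNr redl ws \<Longrightarrow>
       SNr red (ssubst t 0 (map (liftm_e 0) ws)) \<Longrightarrow> SNr red (apps (Mu t) ws)"
proof (induct n arbitrary: ws t rule: less_induct)
  case (less n ws t)
  have "SNr red t"
    by (rule SNr_map[of red red "\<lambda>t. ssubst t 0 (map (liftm_e 0) ws)", OF red_ssubst(1) less(5)])
  hence "SNr (prodr red redl) (t, ws)" using less(4) by (rule SNr_prod)
  thus ?case using part5_inner[of n] less by blast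
qed



lemma SN_SNr: "SN t = SNr red t"
  unfolding SN_def
proof
  assume "\<not> (\<exists>f. f 0 = t \<and> (\<forall>n. red (f n) (f (Suc n))))" thus "SNr red t" by (rule noinf_SNr)
next
  assume "SNr red t" thus "\<not> (\<exists>f. f 0 = t \<and> (\<forall>n. red (f n) (f (Suc n))))" by (rule SNr_noinf)
qed

lemma SN_e_SNr: "SN_e t = SNr red_e t"
  unfolding SN_e_def
proof
  assume "\<not> (\<exists>f. f 0 = t \<and> (\<forall>n. red_e (f n) (f (Suc n))))" thus "SNr red_e t" by (rule noinf_SNr)
next
  assume "SNr red_e t" thus "\<not> (\<exists>f. f 0 = t \<and> (\<forall>n. red_e (f n) (f (Suc n))))" by (rule SNr_noinf)
qed

theorem lemma3:
  fixes ws :: "elim list"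
  assumes "nice ws"
  shows "(\<forall>x. SN (apps (Var x) ws))
    \<and> (\<forall>t u. SN u \<and> SN (apps (subst t 0 u) ws) \<longrightarrow> SN (apps (App (Lam t) (Arg u)) ws))
    \<and> (\<forall>t1 t2. SN t1 \<and> SN t2 \<longrightarrow>
          (SN (apps t1 ws) \<longrightarrow> SN (apps (App (Pair t1 t2) Proj1) ws))
        \<and> (SN (apps t2 ws) \<longrightarrow> SN (apps (App (Pair t1 t2) Proj2) ws)))
    \<and> (\<forall>t u1 u2. SN t \<and> SN u1 \<and> SN u2 \<longrightarrow>
          (SN (subst u1 0 t) \<longrightarrow> SN (App (Inj1 t) (Case u1 u2)))
        \<and> (SN (subst u2 0 t) \<longrightarrow> SN (App (Inj2 t) (Case u1 u2))))
    \<and> (\<forall>t. SN (ssubst t 0 (map (liftm_e 0) ws)) \<longrightarrow> SN (apps (Mu t) ws))"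
proof -
  have nc: "nc ws" using assms unfolding nice_def nc_def by simp
  have snl: "SNr redl ws" using assms by (intro SNr_list) (simp add: nice_def SN_e_SNr)
  have c1: "\<forall>x. SN (apps (Var x) ws)" using part1[OF snl nc] by (simp add: SN_SNr)
  have c2: "\<forall>t u. SN u \<and> SN (apps (subst t 0 u) ws) \<longrightarrow> SN (apps (App (Lam t) (Arg u)) ws)"
  proof (intro allI impI, elim conjE)
    fix t u assume su: "SN u" and sa: "SN (apps (subst t 0 u) ws)"
    have a: "SNr red (apps (subst t 0 u) ws)" using sa by (simp add: SN_SNr)
    have "SNr red (subst t 0 u)"
      by (rule SNr_map[of red red "\<lambda>X. apps X ws", OF red_apps a])
    hence "SNr red t" using SNr_map[of red red "\<lambda>t. subst t 0 u" t] red_subst(1) by simp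
    moreover have "SNr (prodr red redl) (u, ws)" using su snl by (simp add: SN_SNr SNr_prod)
    ultimately have "SNr (prodr red (prodr red redl)) (t, u, ws)" by (rule SNr_prod)
    thus "SN (apps (App (Lam t) (Arg u)) ws)" using part2[OF _ refl nc a] by (simp add: SN_SNr)
  qed
  have c3: "\<forall>t1 t2. SN t1 \<and> SN t2 \<longrightarrow>
          (SN (apps t1 ws) \<longrightarrow> SN (apps (App (Pair t1 t2) Proj1) ws))
        \<and> (SN (apps t2 ws) \<longrightarrow> SN (apps (App (Pair t1 t2) Proj2) ws))"
  proof (intro allI impI, elim conjE)
    fix t1 t2 assume s1: "SN t1" and s2: "SN t2"
    have "SNr (prodr red redl) (t2, ws)" using s2 snl by (simp add: SN_SNr SNr_prod)
    hence p: "SNr (prodr red (prodr red redl)) (t1, t2, ws)" using s1 by (simp add: SN_SNr SNr_prod)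
    show "(SN (apps t1 ws) \<longrightarrow> SN (apps (App (Pair t1 t2) Proj1) ws))
        \<and> (SN (apps t2 ws) \<longrightarrow> SN (apps (App (Pair t1 t2) Proj2) ws))"
      using part3a[OF p refl nc] part3b[OF p refl nc] by (simp add: SN_SNr)
  qed
  have c4: "\<forall>t u1 u2. SN t \<and> SN u1 \<and> SN u2 \<longrightarrow>
          (SN (subst u1 0 t) \<longrightarrow> SN (App (Inj1 t) (Case u1 u2)))
        \<and> (SN (subst u2 0 t) \<longrightarrow> SN (App (Inj2 t) (Case u1 u2)))"
  proof (intro allI impI, elim conjE)
    fix t u1 u2 assume s1: "SN t" and s2: "SN u1" and s3: "SN u2"
    have "SNr (prodr red red) (u1, u2)" using s2 s3 by (simp add: SN_SNr SNr_prod)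
    hence p: "SNr (prodr red (prodr red red)) (t, u1, u2)" using s1 by (simp add: SN_SNr SNr_prod)
    show "(SN (subst u1 0 t) \<longrightarrow> SN (App (Inj1 t) (Case u1 u2)))
        \<and> (SN (subst u2 0 t) \<longrightarrow> SN (App (Inj2 t) (Case u1 u2)))"
      using part4a[OF p refl] part4b[OF p refl] by (simp add: SN_SNr)
  qed
  have c5: "\<forall>t. SN (ssubst t 0 (map (liftm_e 0) ws)) \<longrightarrow> SN (apps (Mu t) ws)"
    using part5[OF refl nc snl] by (simp add: SN_SNr)
  show ?thesis using c1 c2 c3 c4 c5 by blast
qed


end
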